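(* Let $(\alpha_n)_{n\ge 0}$ be complex numbers with $|\alpha_n|<1$, and let $\Phi_n$, $\langle\cdot,\cdot\rangle$ and $\mu_{n,r,s}$ be as in the context. For all nonnegative integers $n,r,s$, the generalized moment $\mu_{n,r,s}$ is a polynomial with integer coefficients in $\{\alpha_j : 0\le j<n+r\}$ and $\{\overline{\alpha_j} : 0\le j<n+r\}$. Moreover, writing $\beta_j=-\overline{\alpha_j}$ for all $j$, $\mu_{n,r,s}$ can be written as a polynomial in the variables $\alpha_0,\alpha_1,\dots,\beta_0,\beta_1,\dots$ all of whose coefficients are positive integers, i.e. as an element of $\mathbb{Z}[\alpha_0,\alpha_1,\dots,\beta_0,\beta_1,\dots]$ with positive coefficients. Finally, the reciprocity \[ \mu_{-n,r,s}=\overline{\mu_{n,s,r}}\cdot\frac{\prod_{j=0}^{r-1}(1-|\alpha_j|^2)}{\prod_{j=0}^{s-1}(1-|\alpha_j|^2)} \] holds; in particular $\mu_{-n}=\overline{\mu_n}$.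
   Context: For a polynomial $f(z)=\sum_{k=0}^n a_kz^k$ of degree $n$, write $\overline{f}(z)=\sum_{k=0}^n\overline{a_k}z^k$ and $f^*(z)=z^n\overline{f}(1/z)$. Given complex numbers $\alpha_n$ with $|\alpha_n|<1$, define monic polynomials $\Phi_n$ with $\deg\Phi_n=n$ by $\Phi_0=1$ and $\Phi_{n+1}(z)=z\Phi_n(z)-\overline{\alpha_n}\,\Phi_n^*(z)$ (here $\Phi_n^*(z)=z^n\overline{\Phi_n}(1/z)$). Let $V$ be the space of Laurent polynomials in $z$ over $\mathbb{C}$, and let $\mathcal{L}$ be the unique linear functional on $V$ with $\mathcal{L}(1)=1$ and $\mathcal{L}(\Phi_m(z)\overline{\Phi_n}(1/z))=0$ for $m\ne n$ (for a Laurent polynomial $g$, $\overline{g}$ conjugates all coefficients). Define $\langle f,g\rangle=\mathcal{L}(f(z)\overline{g}(1/z))$ for $f,g\in V$; one has $\langle\Phi_s,\Phi_s\rangle=\prod_{j=0}^{s-1}(1-|\alpha_j|^2)$. For an integer $n$ and nonnegative integers $r,s$, the generalized moment is $\mu_{n,r,s}=\langle\Phi_s(z),z^n\Phi_r(z)\rangle/\langle\Phi_s(z),\Phi_s(z)\rangle$, and $\mu_n=\mu_{n,0,0}=\mathcal{L}(z^{-n})$. *)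

theory Defs
  imports Complex_Main "HOL-Computational_Algebra.Polynomial"
begin

text \<open>Reversed polynomial f^*(z) = z^(deg f) * conj-f(1/z).\<close>
definition pstar :: "complex poly \<Rightarrow> complex poly" where
  "pstar p = reflect_poly (map_poly cnj p)"

fun Phi :: "(nat \<Rightarrow> complex) \<Rightarrow> nat \<Rightarrow> complex poly" where
  "Phi \<alpha> 0 = 1"
| "Phi \<alpha> (Suc n) = pCons 0 (Phi \<alpha> n) - smult (cnj (\<alpha> n)) (pstar (Phi \<alpha> n))"

text \<open>A linear functional L on Laurent polynomials is determined by its values
  c k = L(z^k), k :: int.  For polynomials f, g and integer n,
  lpair c n f g = L( f(z) * conj(z^n g)(1/z) ) = <f, z^n g>.\<close>
definition lpair :: "(int \<Rightarrow> complex) \<Rightarrow> int \<Rightarrow> complex poly \<Rightarrow> complex poly \<Rightarrow> complex" where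
  "lpair c n f g = (\<Sum>i\<le>degree f. \<Sum>j\<le>degree g.
      coeff f i * cnj (coeff g j) * c (int i - int j - n))"

definition Lmom :: "(nat \<Rightarrow> complex) \<Rightarrow> int \<Rightarrow> complex" where
  "Lmom \<alpha> = (THE c. c 0 = 1 \<and>
      (\<forall>m n. m \<noteq> n \<longrightarrow> lpair c 0 (Phi \<alpha> m) (Phi \<alpha> n) = 0))"

definition gmom :: "(nat \<Rightarrow> complex) \<Rightarrow> int \<Rightarrow> nat \<Rightarrow> nat \<Rightarrow> complex" where
  "gmom \<alpha> n r s = lpair (Lmom \<alpha>) n (Phi \<alpha> s) (Phi \<alpha> r)
                   / lpair (Lmom \<alpha>) 0 (Phi \<alpha> s) (Phi \<alpha> s)"

end

theory Submission
  imports Defs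
begin

lemma sum_atMost_extend:
  fixes F :: "nat \<Rightarrow> 'b::comm_monoid_add"
  assumes "D \<le> A" "\<And>i. D < i \<Longrightarrow> F i = 0"
  shows "(\<Sum>i\<le>A. F i) = (\<Sum>i\<le>D. F i)"
  by (rule sum.mono_neutral_right) (use assms in auto)

lemma sum_atMost_flip:
  fixes F :: "nat \<Rightarrow> 'b::comm_monoid_add"
  shows "(\<Sum>i\<le>D. F i) = (\<Sum>i\<le>D. F (D - i))"
  by (rule sum.reindex_bij_witness[where i="\<lambda>i. D - i" and j="\<lambda>i. D - i"]) auto

lemma degree_map_cnj[simp]: "degree (map_poly cnj p) = degree p"
  by (rule degree_map_poly) simp

lemma coeff_pstar:
  "coeff (pstar p) i = (if i \<le> degree p then cnj (coeff p (degree p - i)) else 0)"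
  by (simp add: pstar_def coeff_reflect_poly coeff_map_poly)

lemma degree_pstar_le: "degree (pstar p) \<le> degree p"
  unfolding pstar_def using degree_reflect_poly_le[of "map_poly cnj p"] by simp

lemma Phi_deg: "degree (Phi a m) = m \<and> coeff (Phi a m) m = 1"
proof (induction m)
  case 0 then show ?case by simp
next
  case (Suc m)
  let ?p = "Phi a m"
  have d1: "degree (pstar ?p) \<le> m" using degree_pstar_le[of ?p] Suc by simp
  have c: "coeff (Phi a (Suc m)) (Suc m) = 1"
    using Suc d1 by (simp add: coeff_eq_0)
  have "degree (Phi a (Suc m)) \<le> Suc m"
    using d1 Suc
    by (auto simp: degree_pCons_eq_if intro!: degree_diff_le le_trans[OF degree_smult_le])
  moreover have "Suc m \<le> degree (Phi a (Suc m))" using c by (intro le_degree) simp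
  ultimately have "degree (Phi a (Suc m)) = Suc m" by (rule antisym)
  with c show ?case by blast
qed

lemma Phi_degree[simp]: "degree (Phi a m) = m" and Phi_lead[simp]: "coeff (Phi a m) m = 1"
  using Phi_deg by auto

lemma coeff_Phi_Suc:
  "coeff (Phi a (Suc m)) k = (if k = 0 then 0 else coeff (Phi a m) (k - 1))
     - cnj (a m) * (if k \<le> m then cnj (coeff (Phi a m) (m - k)) else 0)"
  by (simp add: coeff_pstar coeff_pCons split: nat.split)

lemma pstar_Phi_Suc:
  "pstar (Phi a (Suc m)) = pstar (Phi a m) - smult (a m) (pCons 0 (Phi a m))"
proof (rule poly_eqI)
  fix i
  let ?p = "Phi a m"
  have cp: "\<And>k. m < k \<Longrightarrow> coeff ?p k = 0" by (simp add: coeff_eq_0)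
  have L: "coeff (pstar (Phi a (Suc m))) i = (if i \<le> Suc m then cnj (coeff (Phi a (Suc m)) (Suc m - i)) else 0)"
    by (simp only: coeff_pstar Phi_degree)
  show "coeff (pstar (Phi a (Suc m))) i = coeff (pstar ?p - smult (a m) (pCons 0 ?p)) i"
    unfolding L coeff_Phi_Suc
  proof (cases "i \<le> m")
    case True
    then show "(if i \<le> Suc m then cnj ((if Suc m - i = 0 then 0 else coeff (Phi a m) (Suc m - i - 1)) -
                  cnj (a m) * (if Suc m - i \<le> m then cnj (coeff (Phi a m) (m - (Suc m - i))) else 0))
     else 0) = coeff (pstar (Phi a m) - smult (a m) (pCons 0 (Phi a m))) i"
      by (cases i) (auto simp: coeff_pstar coeff_pCons Suc_diff_le)
  next
    case False
    then show "(if i \<le> Suc m then cnj ((if Suc m - i = 0 then 0 else coeff (Phi a m) (Suc m - i - 1)) -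
                  cnj (a m) * (if Suc m - i \<le> m then cnj (coeff (Phi a m) (m - (Suc m - i))) else 0))
     else 0) = coeff (pstar (Phi a m) - smult (a m) (pCons 0 (Phi a m))) i"
      by (cases "i = Suc m") (auto simp: coeff_pstar coeff_pCons cp split: nat.split)
  qed
qed


definition Mf :: "(int \<Rightarrow> complex) \<Rightarrow> int \<Rightarrow> complex poly \<Rightarrow> complex" where
  "Mf c j f = lpair c j f 1"

lemma Mf_def2: "Mf c j f = (\<Sum>i\<le>degree f. coeff f i * c (int i - j))"
  by (simp add: Mf_def lpair_def)

lemma Mf_bound: "degree f \<le> A \<Longrightarrow> Mf c j f = (\<Sum>i\<le>A. coeff f i * c (int i - j))"
  unfolding Mf_def2 by (rule sum_atMost_extend[symmetric]) (auto simp: coeff_eq_0)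

lemma Mf_add: "Mf c j (f + g) = Mf c j f + Mf c j g"
proof -
  let ?A = "max (degree f) (degree g)"
  have "degree (f + g) \<le> ?A" by (rule degree_add_le_max)
  then show ?thesis
    by (simp add: Mf_bound[of _ ?A] Mf_bound[of f ?A] Mf_bound[of g ?A] distrib_right sum.distrib)
qed

lemma Mf_diff: "Mf c j (f - g) = Mf c j f - Mf c j g"
proof -
  let ?A = "max (degree f) (degree g)"
  have "degree (f - g) \<le> ?A" by (rule degree_diff_le_max)
  then show ?thesis
    by (simp add: Mf_bound[of _ ?A] Mf_bound[of f ?A] Mf_bound[of g ?A] left_diff_distrib sum_subtractf)
qed

lemma Mf_smult: "Mf c j (smult x f) = x * Mf c j f"
proof -
  have "degree (smult x f) \<le> degree f" by (rule degree_smult_le)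
  then show ?thesis
    by (simp add: Mf_bound[of _ "degree f"] Mf_def2 sum_distrib_left mult.assoc)
qed

lemma Mf_pCons0: "Mf c j (pCons 0 f) = Mf c (j - 1) f"
proof -
  have "degree (pCons 0 f) \<le> Suc (degree f)" by (simp add: degree_pCons_le)
  then have "Mf c j (pCons 0 f) = (\<Sum>i\<le>Suc (degree f). coeff (pCons 0 f) i * c (int i - j))"
    by (rule Mf_bound)
  also have "\<dots> = (\<Sum>i\<le>degree f. coeff f i * c (int (Suc i) - j))"
    by (subst sum.atMost_Suc_shift) simp
  also have "\<dots> = Mf c (j - 1) f" by (simp add: Mf_def2 algebra_simps)
  finally show ?thesis .
qed

definition herm :: "(int \<Rightarrow> complex) \<Rightarrow> bool" where
  "herm c \<longleftrightarrow> (\<forall>x. c (- x) = cnj (c x))"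

lemma Mf_pstar:
  assumes "herm c"
  shows "Mf c j (pstar f) = cnj (Mf c (int (degree f) - j) f)"
proof -
  let ?D = "degree f"
  have "Mf c j (pstar f) = (\<Sum>i\<le>?D. coeff (pstar f) i * c (int i - j))"
    by (rule Mf_bound) (rule degree_pstar_le)
  also have "\<dots> = (\<Sum>i\<le>?D. coeff (pstar f) (?D - i) * c (int (?D - i) - j))"
    by (rule sum_atMost_flip)
  also have "\<dots> = (\<Sum>i\<le>?D. cnj (coeff f i) * cnj (c (int i - (int ?D - j))))"
  proof (rule sum.cong)
    fix i assume "i \<in> {..?D}"
    then have i: "i \<le> ?D" by simp
    have "int (?D - i) - j = - (int i - (int ?D - j))" using i by (simp add: of_nat_diff algebra_simps)
    then have "c (int (?D - i) - j) = c (- (int i - (int ?D - j)))" by (rule arg_cong)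
    also have "\<dots> = cnj (c (int i - (int ?D - j)))" using assms unfolding herm_def by (rule spec)
    finally have cc: "c (int (?D - i) - j) = cnj (c (int i - (int ?D - j)))" .
    show "coeff (pstar f) (?D - i) * c (int (?D - i) - j) = cnj (coeff f i) * cnj (c (int i - (int ?D - j)))"
      by (subst cc) (simp add: coeff_pstar i)
  qed simp
  also have "\<dots> = cnj (Mf c (int ?D - j) f)" by (simp add: Mf_def2)
  finally show ?thesis .
qed

lemma lpair_expand:
  assumes "degree g \<le> B"
  shows "lpair c n f g = (\<Sum>k\<le>B. cnj (coeff g k) * Mf c (n + int k) f)"
proof -
  have "lpair c n f g = (\<Sum>i\<le>degree f. \<Sum>k\<le>B. coeff f i * cnj (coeff g k) * c (int i - int k - n))"
    unfolding lpair_def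
    by (intro sum.cong refl sum_atMost_extend[symmetric] assms) (auto simp: coeff_eq_0)
  also have "\<dots> = (\<Sum>k\<le>B. \<Sum>i\<le>degree f. cnj (coeff g k) * (coeff f i * c (int i - (n + int k))))"
    by (subst sum.swap) (auto intro!: sum.cong simp: algebra_simps)
  also have "\<dots> = (\<Sum>k\<le>B. cnj (coeff g k) * Mf c (n + int k) f)"
    by (simp add: Mf_def2 sum_distrib_left)
  finally show ?thesis .
qed

lemma lpair_one: "lpair c n f 1 = Mf c n f" by (simp add: Mf_def)

lemma lpair_add_right: "lpair c n f (g + h) = lpair c n f g + lpair c n f h"
proof -
  let ?B = "max (degree g) (degree h)"
  have "degree (g + h) \<le> ?B" by (rule degree_add_le_max)
  then show ?thesis
    by (simp add: lpair_expand[of _ ?B] lpair_expand[of g ?B] lpair_expand[of h ?B] distrib_right sum.distrib)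
qed

lemma lpair_smult_right: "lpair c n f (smult x g) = cnj x * lpair c n f g"
proof -
  have "degree (smult x g) \<le> degree g" by (rule degree_smult_le)
  then show ?thesis
    by (simp add: lpair_expand[of _ "degree g"] sum_distrib_left mult.assoc)
qed

lemma lpair_sum_right:
  "lpair c n f (\<Sum>k\<le>(K::nat). smult (e k) (g k)) = (\<Sum>k\<le>K. cnj (e k) * lpair c n f (g k))"
  by (induction K) (simp_all add: lpair_add_right lpair_smult_right)

lemma lpair_pCons0_right: "lpair c n f (pCons 0 g) = lpair c (n + 1) f g"
proof -
  have "degree (pCons 0 g) \<le> Suc (degree g)" by (simp add: degree_pCons_le)
  then have "lpair c n f (pCons 0 g) = (\<Sum>k\<le>Suc (degree g). cnj (coeff (pCons 0 g) k) * Mf c (n + int k) f)"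
    by (rule lpair_expand)
  also have "\<dots> = (\<Sum>k\<le>degree g. cnj (coeff g k) * Mf c (n + 1 + int k) f)"
    by (subst sum.atMost_Suc_shift) (simp add: algebra_simps)
  also have "\<dots> = lpair c (n + 1) f g" by (simp add: lpair_expand[of g "degree g"])
  finally show ?thesis .
qed

lemma lpair_shift: "lpair c (int n) f g = lpair c 0 f ((pCons 0 ^^ n) g)"
proof (induction n arbitrary: g)
  case 0 then show ?case by simp
next
  case (Suc n)
  have "(pCons 0 ^^ Suc n) g = (pCons 0 ^^ n) (pCons 0 g)" by (simp add: funpow_swap1)
  then show ?case using Suc[of "pCons 0 g"] by (simp add: lpair_pCons0_right add.commute)
qed

lemma lpair_cnj:
  assumes "herm c"
  shows "cnj (lpair c n f g) = lpair c (- n) g f"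
proof -
  have "cnj (lpair c n f g) = (\<Sum>i\<le>degree f. \<Sum>j\<le>degree g. cnj (coeff f i) * coeff g j * c (int j - int i - (- n)))"
    unfolding lpair_def
    using assms unfolding herm_def
    by (auto intro!: sum.cong simp: algebra_simps) (metis minus_diff_eq)
  also have "\<dots> = lpair c (- n) g f"
    unfolding lpair_def by (subst sum.swap) (auto intro!: sum.cong simp: algebra_simps)
  finally show ?thesis .
qed


lemma Phi_Suc: "Phi a (Suc m) = pCons 0 (Phi a m) - smult (cnj (a m)) (pstar (Phi a m))"
  by simp

declare Phi.simps(2)[simp del]

fun dd :: "(nat \<Rightarrow> complex) \<Rightarrow> nat \<Rightarrow> complex" where
  "dd a 0 = 1"
| "dd a (Suc k) = - (\<Sum>i<Suc k. coeff (Phi a (Suc k)) i * dd a i)"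

definition cc :: "(nat \<Rightarrow> complex) \<Rightarrow> int \<Rightarrow> complex" where
  "cc a x = (if x \<ge> 0 then dd a (nat x) else cnj (dd a (nat (- x))))"

lemma herm_cc: "herm (cc a)"
  unfolding herm_def cc_def by auto

lemma cc_0[simp]: "cc a 0 = 1" by (simp add: cc_def)

lemma cc_nat[simp]: "cc a (int i) = dd a i" by (simp add: cc_def)

lemma Mf0_sum: "Mf c 0 (Phi a k) = (\<Sum>i\<le>k. coeff (Phi a k) i * c (int i))"
  by (simp add: Mf_def2)

lemma Mf_cc_zero: "0 \<le> j \<Longrightarrow> j < int m \<Longrightarrow> Mf (cc a) j (Phi a m) = 0"
proof (induction m arbitrary: j)
  case 0 then show ?case by simp
next
  case (Suc m)
  show ?case
  proof (cases "j = 0")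
    case True
    have "Mf (cc a) 0 (Phi a (Suc m)) = (\<Sum>i<Suc m. coeff (Phi a (Suc m)) i * dd a i) + dd a (Suc m)"
      by (simp only: Mf0_sum cc_nat sum.atMost_Suc lessThan_Suc_atMost[symmetric] Phi_lead) simp
    also have "\<dots> = 0" by (simp only: dd.simps) simp
    finally show ?thesis using True by simp
  next
    case False
    have "Mf (cc a) j (Phi a (Suc m)) = Mf (cc a) (j - 1) (Phi a m) - cnj (a m) * cnj (Mf (cc a) (int m - j) (Phi a m))"
      by (simp add: Phi_Suc Mf_diff Mf_smult Mf_pCons0 Mf_pstar[OF herm_cc])
    also have "\<dots> = 0" using Suc.IH[of "j - 1"] Suc.IH[of "int m - j"] Suc.prems False by simp
    finally show ?thesis .
  qed
qed

lemma lpair_one_left: "lpair c 0 1 g = (\<Sum>k\<le>degree g. cnj (coeff g k) * c (- int k))"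
  by (simp add: lpair_def)

lemma Mf_top: "Mf c j f = (\<Sum>i\<le>degree f. coeff f i * c (int i - j))" by (rule Mf_def2)

lemma orth_lower:
  assumes "\<And>j. 0 \<le> j \<Longrightarrow> j < int m \<Longrightarrow> Mf c j (Phi a m) = 0" "n < m"
  shows "lpair c 0 (Phi a m) (Phi a n) = 0"
  using assms by (simp add: lpair_expand[of _ n])

lemma cc_orth: "m \<noteq> n \<Longrightarrow> lpair (cc a) 0 (Phi a m) (Phi a n) = 0"
proof (cases "n < m")
  case True then show ?thesis using orth_lower[OF Mf_cc_zero] by blast
next
  case False
  assume "m \<noteq> n"
  with False have "m < n" by simp
  then have "lpair (cc a) 0 (Phi a n) (Phi a m) = 0" using orth_lower[OF Mf_cc_zero] by blast
  then have "cnj (lpair (cc a) 0 (Phi a n) (Phi a m)) = 0" by simp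
  then show ?thesis using lpair_cnj[OF herm_cc, of a 0 "Phi a n" "Phi a m"] by simp
qed

lemma uniq_aux:
  assumes c1: "c1 0 = 1" "\<forall>m n. m \<noteq> n \<longrightarrow> lpair c1 0 (Phi a m) (Phi a n) = 0"
      and c2: "c2 0 = 1" "\<forall>m n. m \<noteq> n \<longrightarrow> lpair c2 0 (Phi a m) (Phi a n) = 0"
  shows "c1 (int k) = c2 (int k) \<and> c1 (- int k) = c2 (- int k)"
proof (induction k rule: less_induct)
  case (less k)
  show ?case
  proof (cases k)
    case 0 then show ?thesis using c1 c2 by simp
  next
    case (Suc k')
    have eq1: "c (int k) = - (\<Sum>i<k. coeff (Phi a k) i * c (int i))"
      if "lpair c 0 (Phi a k) (Phi a 0) = 0" for c
    proof -
      have "0 = Mf c 0 (Phi a k)" using that by (simp add: Mf_def)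
      also have "\<dots> = (\<Sum>i<k. coeff (Phi a k) i * c (int i)) + c (int k)"
        by (simp add: Mf0_sum lessThan_Suc_atMost[symmetric] Suc)
      finally show ?thesis by (simp add: eq_neg_iff_add_eq_0 add.commute)
    qed
    have eq2: "c (- int k) = - (\<Sum>i<k. cnj (coeff (Phi a k) i) * c (- int i))"
      if "lpair c 0 (Phi a 0) (Phi a k) = 0" for c
    proof -
      have "0 = lpair c 0 1 (Phi a k)" using that by simp
      also have "\<dots> = (\<Sum>i<k. cnj (coeff (Phi a k) i) * c (- int i)) + c (- int k)"
        by (simp add: lpair_one_left lessThan_Suc_atMost[symmetric] Suc)
      finally show ?thesis by (simp add: eq_neg_iff_add_eq_0 add.commute)
    qed
    have k0: "k \<noteq> 0" using Suc by simp
    have h1: "lpair c1 0 (Phi a k) (Phi a 0) = 0" "lpair c2 0 (Phi a k) (Phi a 0) = 0"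
      using c1(2) c2(2) k0 by blast+
    have h2: "lpair c1 0 (Phi a 0) (Phi a k) = 0" "lpair c2 0 (Phi a 0) (Phi a k) = 0"
      using c1(2) c2(2) k0 by metis+
    have "c1 (int k) = c2 (int k)"
      unfolding eq1[OF h1(1)] eq1[OF h1(2)] using less by (auto intro!: sum.cong)
    moreover have "c1 (- int k) = c2 (- int k)"
      unfolding eq2[OF h2(1)] eq2[OF h2(2)] using less by (auto intro!: sum.cong)
    ultimately show ?thesis by simp
  qed
qed

lemma Lmom_eq: "Lmom a = cc a"
  unfolding Lmom_def
proof (rule the_equality)
  show "cc a 0 = 1 \<and> (\<forall>m n. m \<noteq> n \<longrightarrow> lpair (cc a) 0 (Phi a m) (Phi a n) = 0)"
    using cc_orth by (simp add: cc_def)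
next
  fix c assume c: "c 0 = 1 \<and> (\<forall>m n. m \<noteq> n \<longrightarrow> lpair c 0 (Phi a m) (Phi a n) = 0)"
  have cc1: "cc a 0 = 1" "\<forall>m n. m \<noteq> n \<longrightarrow> lpair (cc a) 0 (Phi a m) (Phi a n) = 0"
    using cc_orth by (auto simp: cc_def)
  show "c = cc a"
  proof
    fix x :: int
    show "c x = cc a x"
    proof (cases "x \<ge> 0")
      case True
      then obtain k where "x = int k" by (metis nonneg_eq_int)
      then show ?thesis using uniq_aux[of c a "cc a"] c cc1 by blast
    next
      case False
      then obtain k where "x = - int k" by (metis linear neg_0_le_iff_le nonneg_eq_int minus_minus)
      then show ?thesis using uniq_aux[of c a "cc a"] c cc1 by blast
    qed
  qed
qed

definition rho :: "(nat \<Rightarrow> complex) \<Rightarrow> nat \<Rightarrow> complex" where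
  "rho a m = (\<Prod>j<m. complex_of_real (1 - (cmod (a j))\<^sup>2))"

lemma cnj_rho[simp]: "cnj (rho a m) = rho a m"
  by (simp add: rho_def)

lemma Mf_top_rho: "Mf (cc a) (int m) (Phi a m) = rho a m"
proof (induction m)
  case 0 then show ?case by (simp add: Mf_def2 rho_def)
next
  case (Suc m)
  have s: "pCons 0 (Phi a m) = Phi a (Suc m) + smult (cnj (a m)) (pstar (Phi a m))" by (simp add: Phi_Suc)
  have m1: "Mf (cc a) (-1) (Phi a m) = cnj (a m) * rho a m"
  proof -
    have "Mf (cc a) (-1) (Phi a m) = Mf (cc a) 0 (pCons 0 (Phi a m))" by (simp add: Mf_pCons0)
    also have "\<dots> = Mf (cc a) 0 (Phi a (Suc m)) + cnj (a m) * cnj (Mf (cc a) (int m) (Phi a m))"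
      by (subst s) (simp add: Mf_add Mf_smult Mf_pstar[OF herm_cc])
    also have "\<dots> = cnj (a m) * rho a m" using Mf_cc_zero[of 0 "Suc m" a] Suc by simp
    finally show ?thesis .
  qed
  have "Mf (cc a) (int (Suc m)) (Phi a (Suc m)) = Mf (cc a) (int m) (Phi a m) - cnj (a m) * cnj (Mf (cc a) (-1) (Phi a m))"
    by (simp add: Phi_Suc Mf_diff Mf_smult Mf_pCons0 Mf_pstar[OF herm_cc])
  also have "\<dots> = rho a m * (1 - a m * cnj (a m))" using Suc m1 by (simp add: algebra_simps)
  also have "\<dots> = rho a (Suc m)"
  proof -
    have "(complex_of_real (cmod (a m)))\<^sup>2 = a m * cnj (a m)" using complex_norm_square[of "a m"] by simp
    then show ?thesis by (simp add: rho_def)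
  qed
  finally show ?case .
qed

lemma norm_Phi: "lpair (cc a) 0 (Phi a m) (Phi a m) = rho a m"
proof -
  have "lpair (cc a) 0 (Phi a m) (Phi a m) = (\<Sum>k\<le>m. cnj (coeff (Phi a m) k) * Mf (cc a) (int k) (Phi a m))"
    by (simp add: lpair_expand[of _ m])
  also have "\<dots> = Mf (cc a) (int m) (Phi a m)"
    by (simp add: lessThan_Suc_atMost[symmetric] Mf_cc_zero)
  finally show ?thesis using Mf_top_rho by simp
qed

lemma orth_Phi: "lpair (cc a) 0 (Phi a s) (Phi a k) = (if s = k then rho a s else 0)"
  using norm_Phi cc_orth by auto

lemma rho_nz: "(\<forall>j. cmod (a j) < 1) \<Longrightarrow> rho a m \<noteq> 0"
proof -
  assume h: "\<forall>j. cmod (a j) < 1"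
  have "\<forall>j<m. 1 - (cmod (a j))\<^sup>2 \<noteq> 0"
  proof (intro allI impI)
    fix j have "cmod (a j) < 1" using h by simp
    moreover have "0 \<le> cmod (a j)" by simp
    ultimately have "(cmod (a j))\<^sup>2 < 1" by (simp add: power_less_one_iff abs_square_less_1)
    then show "1 - (cmod (a j))\<^sup>2 \<noteq> 0" by simp
  qed
  then have "(\<Prod>j<m. 1 - (cmod (a j))\<^sup>2) \<noteq> 0" by simp
  moreover have "rho a m = complex_of_real (\<Prod>j<m. 1 - (cmod (a j))\<^sup>2)" by (simp only: rho_def of_real_prod)
  ultimately show ?thesis by (simp only: of_real_eq_0_iff) simp
qed


inductive_set Pos :: "nat \<Rightarrow> ((nat \<Rightarrow> complex) \<Rightarrow> complex) set" for N :: nat where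
  P0: "(\<lambda>a. 0) \<in> Pos N"
| P1: "(\<lambda>a. 1) \<in> Pos N"
| Pv: "j < N \<Longrightarrow> (\<lambda>a. a j) \<in> Pos N"
| Pw: "j < N \<Longrightarrow> (\<lambda>a. - cnj (a j)) \<in> Pos N"
| Padd: "f \<in> Pos N \<Longrightarrow> g \<in> Pos N \<Longrightarrow> (\<lambda>a. f a + g a) \<in> Pos N"
| Pmul: "f \<in> Pos N \<Longrightarrow> g \<in> Pos N \<Longrightarrow> (\<lambda>a. f a * g a) \<in> Pos N"

definition mon :: "nat \<Rightarrow> (nat \<Rightarrow> nat) \<times> (nat \<Rightarrow> nat) \<Rightarrow> (nat \<Rightarrow> complex) \<Rightarrow> complex" where
  "mon N m a = (\<Prod>j<N. a j ^ fst m j * (- cnj (a j)) ^ snd m j)"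

definition madd :: "(nat \<Rightarrow> nat) \<times> (nat \<Rightarrow> nat) \<Rightarrow> (nat \<Rightarrow> nat) \<times> (nat \<Rightarrow> nat) \<Rightarrow> (nat \<Rightarrow> nat) \<times> (nat \<Rightarrow> nat)" where
  "madd p q = (\<lambda>j. fst p j + fst q j, \<lambda>j. snd p j + snd q j)"

lemma mon_madd: "mon N (madd p q) a = mon N p a * mon N q a"
  unfolding mon_def madd_def by (simp add: power_add prod.distrib[symmetric] algebra_simps)

definition Rep :: "nat \<Rightarrow> ((nat \<Rightarrow> complex) \<Rightarrow> complex) \<Rightarrow> bool" where
  "Rep N f \<longleftrightarrow> (\<exists>M (c :: (nat \<Rightarrow> nat) \<times> (nat \<Rightarrow> nat) \<Rightarrow> nat). finite M \<and> (\<forall>m\<in>M. c m > 0) \<and>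
      (\<forall>a. f a = (\<Sum>m\<in>M. of_nat (c m) * mon N m a)))"

lemma Rep_var:
  assumes "j < N"
  shows "Rep N (\<lambda>a. a j)" "Rep N (\<lambda>a. - cnj (a j))"
proof -
  let ?d = "\<lambda>i::nat. if i = j then 1 else (0::nat)"
  have "mon N (?d, \<lambda>_. 0) a = a j" for a
  proof -
    have "mon N (?d, \<lambda>_. 0) a = (\<Prod>i<N. if i = j then a i else 1)"
      unfolding mon_def by (rule prod.cong) auto
    then show ?thesis using assms by simp
  qed
  then show "Rep N (\<lambda>a. a j)" unfolding Rep_def
    by (intro exI[of _ "{(?d, \<lambda>_. 0)}"] exI[of _ "\<lambda>_. 1"]) simp
  have "mon N (\<lambda>_. 0, ?d) a = - cnj (a j)" for a
  proof -
    have "mon N (\<lambda>_. 0, ?d) a = (\<Prod>i<N. if i = j then - cnj (a i) else 1)"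
      unfolding mon_def by (rule prod.cong) auto
    then show ?thesis using assms by simp
  qed
  then show "Rep N (\<lambda>a. - cnj (a j))" unfolding Rep_def
    by (intro exI[of _ "{(\<lambda>_. 0, ?d)}"] exI[of _ "\<lambda>_. 1"]) simp
qed

lemma Rep_add:
  assumes "Rep N f" "Rep N g"
  shows "Rep N (\<lambda>a. f a + g a)"
proof -
  obtain M1 c1 where h1: "finite M1" "\<forall>m\<in>M1. c1 m > 0" "\<forall>a. f a = (\<Sum>m\<in>M1. of_nat (c1 m) * mon N m a)"
    using assms(1) unfolding Rep_def by blast
  obtain M2 c2 where h2: "finite M2" "\<forall>m\<in>M2. c2 m > 0" "\<forall>a. g a = (\<Sum>m\<in>M2. of_nat (c2 m) * mon N m a)"
    using assms(2) unfolding Rep_def by blast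
  define c where "c m = (if m \<in> M1 then c1 m else 0) + (if m \<in> M2 then c2 m else 0)" for m
  have fin: "finite (M1 \<union> M2)" using h1 h2 by simp
  have "f a + g a = (\<Sum>m\<in>M1 \<union> M2. of_nat (c m) * mon N m a)" for a
  proof -
    have e1: "(\<Sum>m\<in>M1 \<union> M2. (if m \<in> M1 then of_nat (c1 m) * mon N m a else 0)) = f a"
      using h1 by (simp add: sum.inter_restrict[OF fin, symmetric] Int_absorb1)
    have e2: "(\<Sum>m\<in>M1 \<union> M2. (if m \<in> M2 then of_nat (c2 m) * mon N m a else 0)) = g a"
      using h2 by (simp add: sum.inter_restrict[OF fin, symmetric] Int_absorb1)
    show ?thesis unfolding e1[symmetric] e2[symmetric] sum.distrib[symmetric]
      by (rule sum.cong) (auto simp: c_def distrib_right)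
  qed
  moreover have "\<forall>m\<in>M1 \<union> M2. c m > 0" using h1 h2 by (auto simp: c_def)
  ultimately show ?thesis unfolding Rep_def using fin by blast
qed

lemma Rep_mul:
  assumes "Rep N f" "Rep N g"
  shows "Rep N (\<lambda>a. f a * g a)"
proof -
  obtain M1 c1 where h1: "finite M1" "\<forall>m\<in>M1. c1 m > 0" "\<forall>a. f a = (\<Sum>m\<in>M1. of_nat (c1 m) * mon N m a)"
    using assms(1) unfolding Rep_def by blast
  obtain M2 c2 where h2: "finite M2" "\<forall>m\<in>M2. c2 m > 0" "\<forall>a. g a = (\<Sum>m\<in>M2. of_nat (c2 m) * mon N m a)"
    using assms(2) unfolding Rep_def by blast
  let ?h = "\<lambda>x. madd (fst x) (snd x)"
  let ?M = "?h ` (M1 \<times> M2)"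
  define c where "c m = (\<Sum>x\<in>{x\<in>M1 \<times> M2. ?h x = m}. c1 (fst x) * c2 (snd x))" for m
  have finP: "finite (M1 \<times> M2)" using h1 h2 by simp
  have "f a * g a = (\<Sum>m\<in>?M. of_nat (c m) * mon N m a)" for a
  proof -
    have "f a * g a = (\<Sum>x\<in>M1 \<times> M2. of_nat (c1 (fst x) * c2 (snd x)) * mon N (?h x) a)"
      using h1 h2 by (simp add: sum_product sum.cartesian_product mon_madd algebra_simps case_prod_beta)
    also have "\<dots> = (\<Sum>m\<in>?M. \<Sum>x\<in>{x\<in>M1 \<times> M2. ?h x = m}. of_nat (c1 (fst x) * c2 (snd x)) * mon N (?h x) a)"
      by (rule sum.image_gen[OF finP])
    also have "\<dots> = (\<Sum>m\<in>?M. of_nat (c m) * mon N m a)"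
      unfolding c_def of_nat_sum sum_distrib_right by (intro sum.cong refl) auto
    finally show ?thesis .
  qed
  moreover have "\<forall>m\<in>?M. c m > 0"
  proof
    fix m assume "m \<in> ?M"
    then obtain x where x: "x \<in> M1 \<times> M2" "?h x = m" by blast
    have "0 < c1 (fst x) * c2 (snd x)" using x h1 h2 by auto
    also have "\<dots> \<le> c m" unfolding c_def
      by (rule member_le_sum[where f="\<lambda>x. c1 (fst x) * c2 (snd x)"]) (use x finP in auto)
    finally show "c m > 0" .
  qed
  ultimately show ?thesis unfolding Rep_def using finP by blast
qed

lemma Pos_Rep: "f \<in> Pos N \<Longrightarrow> Rep N f"
proof (induction rule: Pos.induct)
  case P0 then show ?case unfolding Rep_def by (intro exI[of _ "{}"]) simp
next
  case P1
  have "mon N (\<lambda>_. 0, \<lambda>_. 0) a = 1" for a by (simp add: mon_def)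
  then show ?case unfolding Rep_def
    by (intro exI[of _ "{(\<lambda>_. 0, \<lambda>_. 0)}"] exI[of _ "\<lambda>_. 1"]) simp
next
  case (Pv j) then show ?case by (rule Rep_var)
next
  case (Pw j) then show ?case by (rule Rep_var)
next
  case (Padd f g) then show ?case by (intro Rep_add) auto
next
  case (Pmul f g) then show ?case by (intro Rep_mul) auto
qed


definition Good :: "nat \<Rightarrow> nat \<Rightarrow> ((nat \<Rightarrow> complex) \<Rightarrow> complex poly) \<Rightarrow> bool" where
  "Good N K p \<longleftrightarrow> (\<exists>e. (\<forall>s. (\<lambda>a. cnj (e s a)) \<in> Pos N) \<and>
      (\<forall>a. p a = (\<Sum>s\<le>K. smult (e s a) (Phi a s))))"

lemma G_Phi:
  assumes "s \<le> K" shows "Good N K (\<lambda>a. Phi a s)"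
  unfolding Good_def
proof (intro exI[of _ "\<lambda>k a. if k = s then 1 else 0"] conjI allI)
  fix k show "(\<lambda>a. cnj (if k = s then 1 else 0)) \<in> Pos N"
    by (cases "k = s") (simp_all add: Pos.P0 Pos.P1)
next
  fix a
  have "(\<Sum>k\<le>K. smult (if k = s then 1 else 0) (Phi a k)) = (\<Sum>k\<le>K. if k = s then Phi a k else 0)"
    by (rule sum.cong) auto
  then show "Phi a s = (\<Sum>k\<le>K. smult (if k = s then 1 else 0) (Phi a k))" using assms by simp
qed

lemma G_add:
  assumes "Good N K p" "Good N K q" shows "Good N K (\<lambda>a. p a + q a)"
proof -
  obtain e1 where e1: "\<forall>s. (\<lambda>a. cnj (e1 s a)) \<in> Pos N" "\<forall>a. p a = (\<Sum>s\<le>K. smult (e1 s a) (Phi a s))"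
    using assms(1) unfolding Good_def by blast
  obtain e2 where e2: "\<forall>s. (\<lambda>a. cnj (e2 s a)) \<in> Pos N" "\<forall>a. q a = (\<Sum>s\<le>K. smult (e2 s a) (Phi a s))"
    using assms(2) unfolding Good_def by blast
  show ?thesis unfolding Good_def
  proof (intro exI[of _ "\<lambda>s a. e1 s a + e2 s a"] conjI allI)
    fix s show "(\<lambda>a. cnj (e1 s a + e2 s a)) \<in> Pos N"
      using Pos.Padd[OF e1(1)[rule_format, of s] e2(1)[rule_format, of s]] by simp
  next
    fix a show "p a + q a = (\<Sum>s\<le>K. smult (e1 s a + e2 s a) (Phi a s))"
      using e1(2) e2(2) by (simp add: smult_add_left sum.distrib)
  qed
qed

lemma smult_sum_atMost: "smult x (\<Sum>s\<le>(K::nat). f s) = (\<Sum>s\<le>K. smult x (f s))"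
  by (induction K) (simp_all add: smult_add_right)

lemma pCons0_sum_atMost: "pCons 0 (\<Sum>s\<le>(K::nat). f s) = (\<Sum>s\<le>K. pCons 0 (f s))"
proof (induction K)
  case 0 then show ?case by simp
next
  case (Suc K)
  have "pCons 0 (\<Sum>s\<le>Suc K. f s) = pCons 0 (\<Sum>s\<le>K. f s) + pCons 0 (f (Suc K))"
    by (simp add: add_pCons)
  then show ?case using Suc by simp
qed

lemma G_smult:
  assumes "(\<lambda>a. cnj (f a)) \<in> Pos N" "Good N K p" shows "Good N K (\<lambda>a. smult (f a) (p a))"
proof -
  obtain e where e: "\<forall>s. (\<lambda>a. cnj (e s a)) \<in> Pos N" "\<forall>a. p a = (\<Sum>s\<le>K. smult (e s a) (Phi a s))"
    using assms(2) unfolding Good_def by blast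
  show ?thesis unfolding Good_def
  proof (intro exI[of _ "\<lambda>s a. f a * e s a"] conjI allI)
    fix s show "(\<lambda>a. cnj (f a * e s a)) \<in> Pos N"
      using Pos.Pmul[OF assms(1) e(1)[rule_format, of s]] by simp
  next
    fix a show "smult (f a) (p a) = (\<Sum>s\<le>K. smult (f a * e s a) (Phi a s))"
      using e(2) by (simp add: smult_sum_atMost)
  qed
qed

lemma G_mono:
  assumes "K \<le> K'" "Good N K p" shows "Good N K' p"
proof -
  obtain e where e: "\<forall>s. (\<lambda>a. cnj (e s a)) \<in> Pos N" "\<forall>a. p a = (\<Sum>s\<le>K. smult (e s a) (Phi a s))"
    using assms(2) unfolding Good_def by blast
  show ?thesis unfolding Good_def
  proof (intro exI[of _ "\<lambda>s a. if s \<le> K then e s a else 0"] conjI allI)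
    fix s show "(\<lambda>a. cnj (if s \<le> K then e s a else 0)) \<in> Pos N"
      using e(1) by (cases "s \<le> K") (simp_all add: Pos.P0)
  next
    fix a
    have "(\<Sum>s\<le>K'. smult (if s \<le> K then e s a else 0) (Phi a s)) =
          (\<Sum>s\<le>K. smult (if s \<le> K then e s a else 0) (Phi a s))"
      by (rule sum_atMost_extend[OF assms(1)]) simp
    also have "\<dots> = p a" using e(2) by simp
    finally show "p a = (\<Sum>s\<le>K'. smult (if s \<le> K then e s a else 0) (Phi a s))" by simp
  qed
qed

lemma G_sum:
  assumes "\<And>s. s \<le> K \<Longrightarrow> Good N K' (q s)"
  shows "Good N K' (\<lambda>a. \<Sum>s\<le>(K::nat). q s a)"
  using assms
proof (induction K)
  case 0 then show ?case by simp
next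
  case (Suc K)
  have "Good N K' (\<lambda>a. (\<Sum>s\<le>K. q s a) + q (Suc K) a)"
    using Suc by (intro G_add) auto
  then show ?case by simp
qed

lemma pstar_one[simp]: "pstar 1 = 1"
  by (simp add: pstar_def)

lemma pstar_Phi_Suc2:
  "pstar (Phi a (Suc m)) = smult (1 - a m * cnj (a m)) (pstar (Phi a m)) + smult (- a m) (Phi a (Suc m))"
proof -
  have "pstar (Phi a (Suc m)) = pstar (Phi a m) - smult (a m) (Phi a (Suc m) + smult (cnj (a m)) (pstar (Phi a m)))"
  proof -
    have "Phi a (Suc m) + smult (cnj (a m)) (pstar (Phi a m)) = pCons 0 (Phi a m)" by (simp add: Phi_Suc)
    then show ?thesis by (simp only: pstar_Phi_Suc)
  qed
  also have "\<dots> = smult (1 - a m * cnj (a m)) (pstar (Phi a m)) + smult (- a m) (Phi a (Suc m))"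
    by (simp add: smult_add_right smult_diff_left)
  finally show ?thesis .
qed

lemma G_pstar: "m \<le> N \<Longrightarrow> Good N m (\<lambda>a. pstar (Phi a m))"
proof (induction m)
  case 0 then show ?case using G_Phi[of 0 0 N] by simp
next
  case (Suc m)
  have p1: "(\<lambda>a. cnj (1 - a m * cnj (a m))) \<in> Pos N"
  proof -
    have "(\<lambda>a. 1 + a m * (- cnj (a m))) \<in> Pos N"
      using Suc.prems by (intro Pos.Padd Pos.P1 Pos.Pmul Pos.Pv Pos.Pw) auto
    moreover have "(\<lambda>a. cnj (1 - a m * cnj (a m))) = (\<lambda>a. 1 + a m * (- cnj (a m)))"
      by (auto simp: fun_eq_iff)
    ultimately show ?thesis by simp
  qed
  have p2: "(\<lambda>a. cnj (- a m)) \<in> Pos N" using Pos.Pw[of m N] Suc.prems by simp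
  have "Good N (Suc m) (\<lambda>a. smult (1 - a m * cnj (a m)) (pstar (Phi a m)) + smult (- a m) (Phi a (Suc m)))"
    using Suc by (intro G_add G_smult p1 p2 G_mono[of m "Suc m"] G_Phi) auto
  then show ?case by (simp only: pstar_Phi_Suc2)
qed

lemma G_zPhi: "s < N \<Longrightarrow> Good N (Suc s) (\<lambda>a. pCons 0 (Phi a s))"
proof -
  assume s: "s < N"
  have p: "(\<lambda>a. cnj (cnj (a s))) \<in> Pos N" using Pos.Pv[OF s] by simp
  have "Good N (Suc s) (\<lambda>a. Phi a (Suc s) + smult (cnj (a s)) (pstar (Phi a s)))"
    using s by (intro G_add G_smult p G_mono[of s "Suc s"] G_Phi G_pstar) auto
  then show ?thesis by (simp add: Phi_Suc)
qed

lemma G_z: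
  assumes "Good N K p" "K < N" shows "Good N (Suc K) (\<lambda>a. pCons 0 (p a))"
proof -
  obtain e where e: "\<forall>s. (\<lambda>a. cnj (e s a)) \<in> Pos N" "\<forall>a. p a = (\<Sum>s\<le>K. smult (e s a) (Phi a s))"
    using assms(1) unfolding Good_def by blast
  have "Good N (Suc K) (\<lambda>a. smult (e s a) (pCons 0 (Phi a s)))" if s: "s \<le> K" for s
  proof -
    have "Good N (Suc s) (\<lambda>a. pCons 0 (Phi a s))" by (rule G_zPhi) (use s assms(2) in auto)
    then have "Good N (Suc K) (\<lambda>a. pCons 0 (Phi a s))" by (rule G_mono[rotated]) (use s in auto)
    then show ?thesis by (rule G_smult[OF e(1)[rule_format]])
  qed
  then have "Good N (Suc K) (\<lambda>a. \<Sum>s\<le>K. smult (e s a) (pCons 0 (Phi a s)))"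
    by (intro G_sum)
  moreover have "pCons 0 (p a) = (\<Sum>s\<le>K. smult (e s a) (pCons 0 (Phi a s)))" for a
    using e(2) by (simp add: pCons0_sum_atMost smult_pCons)
  ultimately show ?thesis by simp
qed

lemma G_shift: "n + r \<le> N \<Longrightarrow> Good N (n + r) (\<lambda>a. (pCons 0 ^^ n) (Phi a r))"
proof (induction n)
  case 0 then show ?case by (simp add: G_Phi)
next
  case (Suc n)
  then have "Good N (Suc (n + r)) (\<lambda>a. pCons 0 ((pCons 0 ^^ n) (Phi a r)))"
    by (intro G_z) auto
  then show ?case by simp
qed

lemma gmom_Pos:
  "\<exists>g \<in> Pos (n + r). \<forall>a. (\<forall>j. cmod (a j) < 1) \<longrightarrow> gmom a (int n) r s = g a"
proof -
  let ?N = "n + r"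
  obtain e where e: "\<forall>s. (\<lambda>a. cnj (e s a)) \<in> Pos ?N"
      "\<forall>a. (pCons 0 ^^ n) (Phi a r) = (\<Sum>k\<le>?N. smult (e k a) (Phi a k))"
    using G_shift[of n r ?N] unfolding Good_def by auto
  let ?g = "if s \<le> ?N then (\<lambda>a. cnj (e s a)) else (\<lambda>a. 0)"
  have "?g \<in> Pos ?N" using e(1) by (simp add: Pos.P0)
  moreover have "gmom a (int n) r s = ?g a" if a: "\<forall>j. cmod (a j) < 1" for a
  proof -
    have "lpair (cc a) (int n) (Phi a s) (Phi a r) = (\<Sum>k\<le>?N. cnj (e k a) * (if s = k then rho a s else 0))"
      by (simp add: lpair_shift e(2) lpair_sum_right orth_Phi)
    also have "\<dots> = (if s \<le> ?N then cnj (e s a) * rho a s else 0)"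
      by (simp add: if_distrib[of "\<lambda>x. _ * x"] cong: if_cong)
    finally show ?thesis using rho_nz[OF a, of s]
      by (simp add: gmom_def Lmom_eq norm_Phi)
  qed
  ultimately show ?thesis by blast
qed

lemma reciprocity:
  assumes a: "\<forall>j. cmod (a j) < 1"
  shows "gmom a (- int n) r s =
          cnj (gmom a (int n) s r) *
          (\<Prod>j<r. complex_of_real (1 - (cmod (a j))\<^sup>2)) /
          (\<Prod>j<s. complex_of_real (1 - (cmod (a j))\<^sup>2))"
proof -
  have r: "rho a r \<noteq> 0" using rho_nz[OF a] by blast
  have "cnj (gmom a (int n) s r) = lpair (cc a) (- int n) (Phi a s) (Phi a r) / rho a r"
    by (simp add: gmom_def Lmom_eq norm_Phi lpair_cnj[OF herm_cc])
  then show ?thesis using r unfolding rho_def[symmetric]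
    by (simp add: gmom_def Lmom_eq norm_Phi rho_def[symmetric])
qed


lemma mon_sign: "mon N m a = (-1) ^ (\<Sum>j<N. snd m j) * (\<Prod>j<N. a j ^ fst m j * cnj (a j) ^ snd m j)"
proof -
  have "mon N m a = (\<Prod>j<N. (-1) ^ snd m j * (a j ^ fst m j * cnj (a j) ^ snd m j))"
    unfolding mon_def by (rule prod.cong) (simp_all add: power_minus[of "cnj _"] algebra_simps)
  also have "\<dots> = (-1) ^ (\<Sum>j<N. snd m j) * (\<Prod>j<N. a j ^ fst m j * cnj (a j) ^ snd m j)"
    by (simp add: prod.distrib power_sum)
  finally show ?thesis .
qed

theorem theorem3p2:
  fixes n r s :: nat
  shows
    "(\<exists>(M :: ((nat \<Rightarrow> nat) \<times> (nat \<Rightarrow> nat)) set) (c :: (nat \<Rightarrow> nat) \<times> (nat \<Rightarrow> nat) \<Rightarrow> int).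
        finite M \<and>
        (\<forall>\<alpha> :: nat \<Rightarrow> complex. (\<forall>j. cmod (\<alpha> j) < 1) \<longrightarrow>
           gmom \<alpha> (int n) r s =
             (\<Sum>m\<in>M. of_int (c m) *
                (\<Prod>j<n + r. \<alpha> j ^ fst m j * cnj (\<alpha> j) ^ snd m j))))
   \<and> (\<exists>(N :: nat) (M :: ((nat \<Rightarrow> nat) \<times> (nat \<Rightarrow> nat)) set) (c :: (nat \<Rightarrow> nat) \<times> (nat \<Rightarrow> nat) \<Rightarrow> nat).
        finite M \<and> (\<forall>m\<in>M. c m > 0) \<and>
        (\<forall>\<alpha> :: nat \<Rightarrow> complex. (\<forall>j. cmod (\<alpha> j) < 1) \<longrightarrow>
           gmom \<alpha> (int n) r s =
             (\<Sum>m\<in>M. of_nat (c m) *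
                (\<Prod>j<N. \<alpha> j ^ fst m j * (- cnj (\<alpha> j)) ^ snd m j))))
   \<and> (\<forall>\<alpha> :: nat \<Rightarrow> complex. (\<forall>j. cmod (\<alpha> j) < 1) \<longrightarrow>
        gmom \<alpha> (- int n) r s =
          cnj (gmom \<alpha> (int n) s r) *
          (\<Prod>j<r. complex_of_real (1 - (cmod (\<alpha> j))\<^sup>2)) /
          (\<Prod>j<s. complex_of_real (1 - (cmod (\<alpha> j))\<^sup>2))
        \<and> gmom \<alpha> (- int n) 0 0 = cnj (gmom \<alpha> (int n) 0 0))"
proof -
  obtain g where g: "g \<in> Pos (n + r)" "\<forall>a. (\<forall>j. cmod (a j) < 1) \<longrightarrow> gmom a (int n) r s = g a"
    using gmom_Pos[of n r s] by blast
  obtain M and c :: "(nat \<Rightarrow> nat) \<times> (nat \<Rightarrow> nat) \<Rightarrow> nat" where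
    M: "finite M" "\<forall>m\<in>M. c m > 0" "\<forall>a. g a = (\<Sum>m\<in>M. of_nat (c m) * mon (n + r) m a)"
    using Pos_Rep[OF g(1)] unfolding Rep_def by blast
  have P2: "\<exists>(N :: nat) (M :: ((nat \<Rightarrow> nat) \<times> (nat \<Rightarrow> nat)) set) (c :: (nat \<Rightarrow> nat) \<times> (nat \<Rightarrow> nat) \<Rightarrow> nat).
        finite M \<and> (\<forall>m\<in>M. c m > 0) \<and>
        (\<forall>\<alpha> :: nat \<Rightarrow> complex. (\<forall>j. cmod (\<alpha> j) < 1) \<longrightarrow>
           gmom \<alpha> (int n) r s =
             (\<Sum>m\<in>M. of_nat (c m) *
                (\<Prod>j<N. \<alpha> j ^ fst m j * (- cnj (\<alpha> j)) ^ snd m j)))"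
  proof (intro exI[of _ "n + r"] exI[of _ M] exI[of _ c] conjI allI impI)
    fix a :: "nat \<Rightarrow> complex" assume a: "\<forall>j. cmod (a j) < 1"
    show "gmom a (int n) r s = (\<Sum>m\<in>M. of_nat (c m) * (\<Prod>j<n + r. a j ^ fst m j * (- cnj (a j)) ^ snd m j))"
      using g(2) a M(3) by (simp add: mon_def)
  qed (use M in auto)
  define c' where "c' m = int (c m) * (-1) ^ (\<Sum>j<n + r. snd m j)" for m
  have P1: "\<exists>(M :: ((nat \<Rightarrow> nat) \<times> (nat \<Rightarrow> nat)) set) (c :: (nat \<Rightarrow> nat) \<times> (nat \<Rightarrow> nat) \<Rightarrow> int).
        finite M \<and>
        (\<forall>\<alpha> :: nat \<Rightarrow> complex. (\<forall>j. cmod (\<alpha> j) < 1) \<longrightarrow>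
           gmom \<alpha> (int n) r s =
             (\<Sum>m\<in>M. of_int (c m) *
                (\<Prod>j<n + r. \<alpha> j ^ fst m j * cnj (\<alpha> j) ^ snd m j)))"
  proof (intro exI[of _ M] exI[of _ c'] conjI allI impI)
    show "finite M" by (rule M(1))
  next
    fix a :: "nat \<Rightarrow> complex" assume a: "\<forall>j. cmod (a j) < 1"
    have "gmom a (int n) r s = (\<Sum>m\<in>M. of_nat (c m) * mon (n + r) m a)" using a g(2) M(3) by simp
    also have "\<dots> = (\<Sum>m\<in>M. of_int (c' m) * (\<Prod>j<n + r. a j ^ fst m j * cnj (a j) ^ snd m j))"
      by (rule sum.cong) (simp_all add: mon_sign c'_def)
    finally show "gmom a (int n) r s = (\<Sum>m\<in>M. of_int (c' m) * (\<Prod>j<n + r. a j ^ fst m j * cnj (a j) ^ snd m j))" .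
  qed
  have P3: "\<forall>\<alpha> :: nat \<Rightarrow> complex. (\<forall>j. cmod (\<alpha> j) < 1) \<longrightarrow>
        gmom \<alpha> (- int n) r s =
          cnj (gmom \<alpha> (int n) s r) *
          (\<Prod>j<r. complex_of_real (1 - (cmod (\<alpha> j))\<^sup>2)) /
          (\<Prod>j<s. complex_of_real (1 - (cmod (\<alpha> j))\<^sup>2))
        \<and> gmom \<alpha> (- int n) 0 0 = cnj (gmom \<alpha> (int n) 0 0)"
  proof (intro allI impI conjI)
    fix a :: "nat \<Rightarrow> complex" assume a: "\<forall>j. cmod (a j) < 1"
    show "gmom a (- int n) r s = cnj (gmom a (int n) s r) *
          (\<Prod>j<r. complex_of_real (1 - (cmod (a j))\<^sup>2)) /
          (\<Prod>j<s. complex_of_real (1 - (cmod (a j))\<^sup>2))"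
      by (rule reciprocity[OF a])
    show "gmom a (- int n) 0 0 = cnj (gmom a (int n) 0 0)"
      using reciprocity[OF a, of n 0 0] by simp
  qed
  show ?thesis using P1 P2 P3 by (intro conjI)
qed

end
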